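(* Let $n\ge1$ and let $\mathcal{S}(\vec u,\vec v,\vec a,\vec d)$ be the lexicographic-order specification over $n$ variables defined below. Then the set $\mathcal{S}(\vec x,\vec x,\vec a,\vec d)\cup\{\bar d_n\ge1\}$ (obtained by substituting $x_i$ for both $u_i$ and $v_i$) propagates to a conflict by unit propagation starting from the empty assignment, using $O(n)$ propagations. Consequently, the reflexivity proof obligation $\mathcal{S}(\vec x,\vec x,\vec a,\vec d)\vdash\{d_n\ge1\}$ for the order $\mathcal{O}(\vec d)=\{d_n\ge1\}$ can be proved by a single reverse unit propagation (RUP) step requiring $O(n)$ propagations.
   Context: Literals are $x$ or $\bar x=1-x$; a PB constraint is $\sum_i c_i\ell_i\ge A$ with $c_i,A\ge0$. The specification $\mathcal{S}(\vec u,\vec v,\vec a,\vec d)$ (variables $u_1..u_n$, $v_1..v_n$, $a_1..a_{n-1}$, $d_1..d_n$) consists of: $\bar a_1+u_1+\bar v_1\ge1$; $2a_1+\bar u_1+v_1\ge2$; for $1\le i\le n-2$: $3\bar a_{i+1}+2a_i+u_{i+1}+\bar v_{i+1}\ge3$ and $2a_{i+1}+2\bar a_i+\bar u_{i+1}+v_{i+1}\ge2$; $\bar d_1+v_1+\bar u_1\ge1$; $2d_1+\bar v_1+u_1\ge2$; for $1\le i\le n-1$: $4\bar d_{i+1}+3d_i+\bar a_i+v_{i+1}+\bar u_{i+1}\ge4$ and $4d_{i+1}+3\bar d_i+a_i+\bar v_{i+1}+u_{i+1}\ge3$. After substitution, a constraint is simplified by using $x+\bar x=1$. Unit propagation: for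 a partial assignment $\rho$, the slack of $\sum_i c_i\ell_i\ge A$ is $\sum_{i:\rho(\ell_i)\ne0}c_i-A$; if it is negative the constraint is in conflict; if an unassigned literal $\ell_i$ has $c_i$ greater than the slack, $\ell_i$ is propagated to $1$ (added to $\rho$). This is repeated until a conflict or no further propagation. A constraint $C$ is derived by RUP from $F$ if unit propagation on $F\cup\{\neg C\}$ from the empty assignment reaches a conflict, where $\neg(\sum c_i\ell_i\ge A)$ is $\sum c_i\bar\ell_i\ge\sum c_i-A+1$. *)

theory Defs
  imports Main
begin

datatype 'v lit = Pos 'v | Neg 'v

fun lit_var :: "'v lit \<Rightarrow> 'v" where
  "lit_var (Pos x) = x" | "lit_var (Neg x) = x"

fun lit_neg :: "'v lit \<Rightarrow> 'v lit" where
  "lit_neg (Pos x) = Neg x" | "lit_neg (Neg x) = Pos x"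

text \<open>A PB constraint sum_i c_i l_i >= A, as a list of (coefficient, literal) terms and a degree.\<close>
type_synonym 'v pb = "(int \<times> 'v lit) list \<times> int"

text \<open>Simplification using x + not x = 1 (and merging of equal literals).\<close>
definition pb_simp :: "'v pb \<Rightarrow> 'v pb" where
  "pb_simp C = (let ts = fst C; A = snd C;
      vs = remdups (map (lit_var \<circ> snd) ts);
      P = (\<lambda>x. sum_list (map fst (filter (\<lambda>t. snd t = Pos x) ts)));
      N = (\<lambda>x. sum_list (map fst (filter (\<lambda>t. snd t = Neg x) ts)));
      m = (\<lambda>x. min (P x) (N x))
    in (concat (map (\<lambda>x. filter (\<lambda>t. fst t \<noteq> 0)
                         [(P x - m x, Pos x), (N x - m x, Neg x)]) vs),
        A - sum_list (map m vs)))"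

definition pb_neg :: "'v pb \<Rightarrow> 'v pb" where
  "pb_neg C = (map (\<lambda>(c, l). (c, lit_neg l)) (fst C),
               sum_list (map fst (fst C)) - snd C + 1)"

type_synonym 'v assignment = "'v \<Rightarrow> bool option"

fun not_falsified :: "'v assignment \<Rightarrow> 'v lit \<Rightarrow> bool" where
  "not_falsified \<rho> (Pos x) = (\<rho> x \<noteq> Some False)"
| "not_falsified \<rho> (Neg x) = (\<rho> x \<noteq> Some True)"

fun assign_lit :: "'v assignment \<Rightarrow> 'v lit \<Rightarrow> 'v assignment" where
  "assign_lit \<rho> (Pos x) = \<rho>(x := Some True)"
| "assign_lit \<rho> (Neg x) = \<rho>(x := Some False)"

definition slack :: "'v assignment \<Rightarrow> 'v pb \<Rightarrow> int" where
  "slack \<rho> C = sum_list (map fst (filter (\<lambda>t. not_falsified \<rho> (snd t)) (fst C))) - snd C"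

definition in_conflict :: "'v assignment \<Rightarrow> 'v pb \<Rightarrow> bool" where
  "in_conflict \<rho> C \<longleftrightarrow> slack \<rho> C < 0"

definition up_step :: "'v pb list \<Rightarrow> 'v assignment \<Rightarrow> 'v assignment \<Rightarrow> bool" where
  "up_step F \<rho> \<rho>' \<longleftrightarrow>
     (\<forall>C\<in>set F. \<not> in_conflict \<rho> C) \<and>
     (\<exists>C\<in>set F. \<exists>t\<in>set (fst C). \<rho> (lit_var (snd t)) = None \<and>
        fst t > slack \<rho> C \<and> \<rho>' = assign_lit \<rho> (snd t))"

definition up_conflict_within :: "'v pb list \<Rightarrow> nat \<Rightarrow> bool" where
  "up_conflict_within F K \<longleftrightarrow>
     (\<forall>k \<rho>. (up_step F ^^ k) Map.empty \<rho> \<and> \<not> (\<exists>\<rho>'. up_step F \<rho> \<rho>') \<longrightarrow>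
        (\<exists>C\<in>set F. in_conflict \<rho> C) \<and> k \<le> K) \<and>
     (\<exists>k \<rho>. (up_step F ^^ k) Map.empty \<rho> \<and> (\<exists>C\<in>set F. in_conflict \<rho> C))"

definition rup_within :: "'v pb list \<Rightarrow> 'v pb \<Rightarrow> nat \<Rightarrow> bool" where
  "rup_within F C K \<longleftrightarrow> up_conflict_within (F @ [pb_neg C]) K"

definition lex_spec :: "(nat \<Rightarrow> 'v) \<Rightarrow> (nat \<Rightarrow> 'v) \<Rightarrow> (nat \<Rightarrow> 'v) \<Rightarrow> (nat \<Rightarrow> 'v) \<Rightarrow> nat \<Rightarrow> 'v pb list" where
  "lex_spec u v a d n =
     [ ([(1, Neg (a 1)), (1, Pos (u 1)), (1, Neg (v 1))], 1),
       ([(2, Pos (a 1)), (1, Neg (u 1)), (1, Pos (v 1))], 2) ]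
   @ concat (map (\<lambda>i.
       [ ([(3, Neg (a (i+1))), (2, Pos (a i)), (1, Pos (u (i+1))), (1, Neg (v (i+1)))], 3),
         ([(2, Pos (a (i+1))), (2, Neg (a i)), (1, Neg (u (i+1))), (1, Pos (v (i+1)))], 2) ])
       [1..<n-1])
   @ [ ([(1, Neg (d 1)), (1, Pos (v 1)), (1, Neg (u 1))], 1),
       ([(2, Pos (d 1)), (1, Neg (v 1)), (1, Pos (u 1))], 2) ]
   @ concat (map (\<lambda>i.
       [ ([(4, Neg (d (i+1))), (3, Pos (d i)), (1, Neg (a i)), (1, Pos (v (i+1))), (1, Neg (u (i+1)))], 4),
         ([(4, Pos (d (i+1))), (3, Neg (d i)), (1, Pos (a i)), (1, Neg (v (i+1))), (1, Pos (u (i+1)))], 3) ])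
       [1..<n])"

datatype var = X nat | A nat | D nat

end

theory Submission
  imports Defs
begin

definition ext_asg :: "'v assignment \<Rightarrow> 'v assignment \<Rightarrow> bool" where
  "ext_asg r r' \<longleftrightarrow> (\<forall>x b. r x = Some b \<longrightarrow> r' x = Some b)"

lemma nf_mono: "ext_asg r r' \<Longrightarrow> not_falsified r' l \<Longrightarrow> not_falsified r l"
  by (cases l) (auto simp: ext_asg_def)

lemma sum_filter_mono:
  fixes ts :: "(int \<times> 'a) list"
  shows "(\<forall>t\<in>set ts. fst t \<ge> 0) \<Longrightarrow> (\<forall>t. P' t \<longrightarrow> P t) \<Longrightarrow>
   sum_list (map fst (filter P' ts)) \<le> sum_list (map fst (filter P ts))"
  by (induct ts) auto

lemma sum_filter_strict:
  fixes ts :: "(int \<times> 'a) list"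
  shows "(\<forall>t\<in>set ts. fst t \<ge> 0) \<Longrightarrow> (\<forall>t. P' t \<longrightarrow> P t) \<Longrightarrow> t \<in> set ts \<Longrightarrow> P t \<Longrightarrow> \<not> P' t \<Longrightarrow>
   sum_list (map fst (filter P' ts)) + fst t \<le> sum_list (map fst (filter P ts))"
proof (induct ts)
  case Nil then show ?case by simp
next
  case (Cons a ts)
  show ?case
  proof (cases "a = t")
    case True
    have "sum_list (map fst (filter P' ts)) \<le> sum_list (map fst (filter P ts))"
      using Cons.prems by (intro sum_filter_mono) auto
    then show ?thesis using True Cons.prems by auto
  next
    case False
    then have "sum_list (map fst (filter P' ts)) + fst t \<le> sum_list (map fst (filter P ts))"
      using Cons by auto
    then show ?thesis using Cons.prems by (cases a) auto
  qed
qed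

lemma slack_mono:
  "\<forall>t\<in>set (fst C). fst t \<ge> 0 \<Longrightarrow> ext_asg r r' \<Longrightarrow> slack r' C \<le> slack r C"
  unfolding slack_def using sum_filter_mono[of "fst C" "\<lambda>t. not_falsified r' (snd t)" "\<lambda>t. not_falsified r (snd t)"]
  nf_mono by fastforce

lemma slack_drop:
  "\<forall>t\<in>set (fst C). fst t \<ge> 0 \<Longrightarrow> ext_asg r r' \<Longrightarrow> t \<in> set (fst C) \<Longrightarrow>
   not_falsified r (snd t) \<Longrightarrow> \<not> not_falsified r' (snd t) \<Longrightarrow> slack r' C + fst t \<le> slack r C"
  unfolding slack_def using sum_filter_strict[of "fst C" "\<lambda>t. not_falsified r' (snd t)" "\<lambda>t. not_falsified r (snd t)" t]
  nf_mono by fastforce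

lemma dom_assign: "{x. assign_lit r l x \<noteq> None} = insert (lit_var l) {x. r x \<noteq> None}"
  by (cases l) auto

lemma run_dom:
  assumes vars: "\<forall>C\<in>set F. \<forall>t\<in>set (fst C). lit_var (snd t) \<in> V" and fin: "finite V"
  shows "(up_step F ^^ k) Map.empty r \<Longrightarrow> {x. r x \<noteq> None} \<subseteq> V \<and> card {x. r x \<noteq> None} = k"
proof (induct k arbitrary: r)
  case 0 then show ?case by auto
next
  case (Suc k)
  then obtain r0 where r0: "(up_step F ^^ k) Map.empty r0" "up_step F r0 r" by auto
  then obtain C t where Ct: "C \<in> set F" "t \<in> set (fst C)" "r0 (lit_var (snd t)) = None"
    "r = assign_lit r0 (snd t)" unfolding up_step_def by auto
  have IH: "{x. r0 x \<noteq> None} \<subseteq> V" "card {x. r0 x \<noteq> None} = k" using Suc r0 by auto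
  have fin0: "finite {x. r0 x \<noteq> None}" using IH fin finite_subset by blast
  have d: "{x. r x \<noteq> None} = insert (lit_var (snd t)) {x. r0 x \<noteq> None}"
    using dom_assign Ct(4) by metis
  have "lit_var (snd t) \<notin> {x. r0 x \<noteq> None}" using Ct(3) by simp
  then have "card {x. r x \<noteq> None} = Suc k" using d fin0 IH(2) by (metis card_insert_disjoint)
  moreover have "lit_var (snd t) \<in> V" using vars Ct by auto
  ultimately show ?case using d IH(1) by auto
qed

lemma main:
  fixes F :: "'v pb list" and \<sigma> :: "nat \<Rightarrow> 'v assignment" and l :: "nat \<Rightarrow> 'v lit"
  assumes nn: "\<forall>C\<in>set F. \<forall>t\<in>set (fst C). fst t \<ge> 0"
  and s0: "\<sigma> 0 = Map.empty"
  and step: "\<forall>j<m. \<sigma> (Suc j) = assign_lit (\<sigma> j) (l j) \<and> \<sigma> j (lit_var (l j)) = None \<and>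
      (\<exists>C\<in>set F. \<exists>t\<in>set (fst C). snd t = l j \<and> fst t > slack (\<sigma> j) C)"
  and confl: "\<exists>C\<in>set F. in_conflict (\<sigma> m) C"
  and vars: "\<forall>C\<in>set F. \<forall>t\<in>set (fst C). lit_var (snd t) \<in> V"
  and fin: "finite V" and card: "card V \<le> K"
  shows "up_conflict_within F K"
proof -
  have A: "(\<exists>C\<in>set F. in_conflict r C) \<and> k \<le> K"
    if run: "(up_step F ^^ k) Map.empty r" and mx: "\<not> (\<exists>r'. up_step F r r')" for k r
  proof
    have rd: "{x. r x \<noteq> None} \<subseteq> V" "card {x. r x \<noteq> None} = k" using run_dom[OF vars fin run] by auto
    have "card {x. r x \<noteq> None} \<le> card V" by (rule card_mono[OF fin rd(1)])
    then show "k \<le> K" using rd(2) card by linarith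
    show "\<exists>C\<in>set F. in_conflict r C"
    proof (rule ccontr)
      assume nc: "\<not> (\<exists>C\<in>set F. in_conflict r C)"
      have "j \<le> m \<Longrightarrow> ext_asg (\<sigma> j) r" for j
      proof (induct j)
        case 0 then show ?case by (simp add: s0 ext_asg_def)
      next
        case (Suc j)
        then have e: "ext_asg (\<sigma> j) r" and jm: "j < m" by auto
        obtain C t where Ct: "C \<in> set F" "t \<in> set (fst C)" "snd t = l j" "fst t > slack (\<sigma> j) C"
          using step jm by blast
        have sj: "\<sigma> (Suc j) = assign_lit (\<sigma> j) (l j)" "\<sigma> j (lit_var (l j)) = None" using step jm by auto
        have nnC: "\<forall>t\<in>set (fst C). fst t \<ge> 0" using nn Ct by auto
        show ?case
        proof (cases "r (lit_var (l j))")
          case None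
          have "slack r C \<le> slack (\<sigma> j) C" using slack_mono[OF nnC e] .
          then have P: "r (lit_var (snd t)) = None \<and> fst t > slack r C \<and> assign_lit r (l j) = assign_lit r (snd t)"
            using Ct None by auto
          have "\<exists>C\<in>set F. \<exists>t\<in>set (fst C). r (lit_var (snd t)) = None \<and> fst t > slack r C \<and> assign_lit r (l j) = assign_lit r (snd t)"
            using P Ct(1,2) by blast
          then have "up_step F r (assign_lit r (l j))"
            unfolding up_step_def using nc by blast
          then show ?thesis using mx by blast
        next
          case (Some b)
          show ?thesis
          proof (cases "not_falsified r (l j)")
            case True
            then show ?thesis using e Some sj by (cases "l j") (auto simp: ext_asg_def)
          next
            case False
            have "not_falsified (\<sigma> j) (l j)" using sj by (cases "l j") auto
            then have "slack r C + fst t \<le> slack (\<sigma> j) C"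
              using slack_drop[OF nnC e Ct(2)] Ct False by auto
            then have "in_conflict r C" using Ct unfolding in_conflict_def by auto
            then show ?thesis using nc Ct by auto
          qed
        qed
      qed
      then have "ext_asg (\<sigma> m) r" by simp
      then have em: "ext_asg (\<sigma> m) r" .
      obtain C where C: "C \<in> set F" "in_conflict (\<sigma> m) C" using confl by blast
      have "slack r C \<le> slack (\<sigma> m) C" by (rule slack_mono) (use nn C em in auto)
      then have "in_conflict r C" using C(2) unfolding in_conflict_def by linarith
      then show False using nc C(1) by blast
    qed
  qed
  define j0 where "j0 = (LEAST j. \<exists>C\<in>set F. in_conflict (\<sigma> j) C)"
  have j0c: "\<exists>C\<in>set F. in_conflict (\<sigma> j0) C" unfolding j0_def using confl by (rule LeastI)
  have j0m: "j0 \<le> m" unfolding j0_def using confl by (rule Least_le)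
  have "j \<le> j0 \<Longrightarrow> (up_step F ^^ j) Map.empty (\<sigma> j)" for j
  proof (induct j)
    case 0 then show ?case by (simp add: s0)
  next
    case (Suc j)
    then have jj: "j < j0" "j < m" using j0m by auto
    have nc: "\<not> (\<exists>C\<in>set F. in_conflict (\<sigma> j) C)" using not_less_Least[OF jj(1)[unfolded j0_def]] .
    obtain C t where Ct: "C \<in> set F" "t \<in> set (fst C)" "snd t = l j" "fst t > slack (\<sigma> j) C"
      using step jj(2) by blast
    have sj: "\<sigma> (Suc j) = assign_lit (\<sigma> j) (l j)" "\<sigma> j (lit_var (l j)) = None" using step jj(2) by auto
    have P: "\<sigma> j (lit_var (snd t)) = None \<and> fst t > slack (\<sigma> j) C \<and> \<sigma> (Suc j) = assign_lit (\<sigma> j) (snd t)"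
      using Ct sj by auto
    have "\<exists>C\<in>set F. \<exists>t\<in>set (fst C). \<sigma> j (lit_var (snd t)) = None \<and> fst t > slack (\<sigma> j) C \<and> \<sigma> (Suc j) = assign_lit (\<sigma> j) (snd t)"
      using P Ct(1,2) by blast
    then have "up_step F (\<sigma> j) (\<sigma> (Suc j))" unfolding up_step_def using nc by blast
    then show ?case using Suc jj by (meson Suc_leD relpowp_Suc_I)
  qed
  then have "(up_step F ^^ j0) Map.empty (\<sigma> j0)" by simp
  then show ?thesis unfolding up_conflict_within_def using A j0c by blast
qed

lemma pb_simp_nn: "t \<in> set (fst (pb_simp C)) \<Longrightarrow> fst t \<ge> 0"
  unfolding pb_simp_def Let_def by (auto simp: min_def split: if_splits)

lemma pb_simp_vars: "t \<in> set (fst (pb_simp C)) \<Longrightarrow> lit_var (snd t) \<in> (lit_var \<circ> snd) ` set (fst C)"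
  unfolding pb_simp_def Let_def by (auto split: if_splits; metis image_eqI snd_conv)

definition VV :: "nat \<Rightarrow> var set" where
  "VV n = X ` {..n} \<union> A ` {..n} \<union> D ` {..n}"

lemma VV_fin: "finite (VV n)" by (simp add: VV_def)

lemma VV_card: "n \<ge> 1 \<Longrightarrow> card (VV n) \<le> 6 * n"
proof -
  assume n: "n \<ge> 1"
  have "card (VV n) \<le> card (X ` {..n}) + card (A ` {..n}) + card (D ` {..n})"
    unfolding VV_def by (meson card_Un_le le_trans add_le_mono order_refl)
  also have "\<dots> \<le> (n+1) + (n+1) + (n+1)"
    by (intro add_mono) (use card_image_le[OF finite_atMost] in auto)
  finally show ?thesis using n by simp
qed

lemma lex_vars: "n \<ge> 1 \<Longrightarrow> C \<in> set (lex_spec X X A D n) \<Longrightarrow> t \<in> set (fst C) \<Longrightarrow> lit_var (snd t) \<in> VV n"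
  unfolding lex_spec_def VV_def by auto

definition sg :: "nat \<Rightarrow> var assignment" where
  "sg j v = (case v of D i \<Rightarrow> if 1 \<le> i \<and> i \<le> j then Some True else None | _ \<Rightarrow> None)"

lemma conc:
  assumes n: "n \<ge> 1"
  shows "up_conflict_within (map pb_simp (lex_spec X X A D n) @ [([(1, Neg (D n))], 1)]) (6 * n)"
proof (rule main[where \<sigma> = sg and l = "\<lambda>j. Pos (D (Suc j))" and m = n and V = "VV n"])
  let ?F = "map pb_simp (lex_spec X X A D n) @ [([(1, Neg (D n))], 1)]"
  show "\<forall>C\<in>set ?F. \<forall>t\<in>set (fst C). fst t \<ge> 0" using pb_simp_nn by auto
  show "sg 0 = Map.empty" by (rule ext) (simp add: sg_def split: var.splits)
  show "\<forall>C\<in>set ?F. \<forall>t\<in>set (fst C). lit_var (snd t) \<in> VV n"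
  proof (intro ballI)
    fix C t assume C: "C \<in> set ?F" and t: "t \<in> set (fst C)"
    show "lit_var (snd t) \<in> VV n"
    proof (cases "C \<in> set (map pb_simp (lex_spec X X A D n))")
      case True
      then obtain C0 where C0: "C0 \<in> set (lex_spec X X A D n)" "C = pb_simp C0" by auto
      then obtain t0 where "t0 \<in> set (fst C0)" "lit_var (snd t0) = lit_var (snd t)"
        using pb_simp_vars[of t C0] t by auto
      then show ?thesis using lex_vars[OF n C0(1)] by metis
    next
      case False
      then show ?thesis using C t n by (auto simp: VV_def)
    qed
  qed
  show "finite (VV n)" by (rule VV_fin)
  show "card (VV n) \<le> 6 * n" using VV_card n .
  show "\<exists>C\<in>set ?F. in_conflict (sg n) C"
    using n by (auto simp: in_conflict_def slack_def sg_def)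
  show "\<forall>j<n. sg (Suc j) = assign_lit (sg j) (Pos (D (Suc j))) \<and> sg j (lit_var (Pos (D (Suc j)))) = None \<and>
      (\<exists>C\<in>set ?F. \<exists>t\<in>set (fst C). snd t = Pos (D (Suc j)) \<and> fst t > slack (sg j) C)"
  proof (intro allI impI conjI)
    fix j assume j: "j < n"
    show "sg (Suc j) = assign_lit (sg j) (Pos (D (Suc j)))"
      by (rule ext) (auto simp: sg_def split: var.splits)
    show "sg j (lit_var (Pos (D (Suc j)))) = None" by (simp add: sg_def)
    show "\<exists>C\<in>set ?F. \<exists>t\<in>set (fst C). snd t = Pos (D (Suc j)) \<and> fst t > slack (sg j) C"
    proof (cases "j = 0")
      case True
      let ?C0 = "([(2, Pos (D 1)), (1, Neg (X 1)), (1, Pos (X 1))], 2) :: var pb"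
      have m: "?C0 \<in> set (lex_spec X X A D n)" unfolding lex_spec_def by simp
      have e: "pb_simp ?C0 = ([(2, Pos (D 1))], 1)" by (simp add: pb_simp_def)
      have mm: "pb_simp ?C0 \<in> set ?F" using m by auto
      show ?thesis using True by (intro bexI[OF _ mm]) (unfold e, simp add: slack_def sg_def)
    next
      case False
      let ?C0 = "([(4, Pos (D (j+1))), (3, Neg (D j)), (1, Pos (A j)), (1, Neg (X (j+1))), (1, Pos (X (j+1)))], 3) :: var pb"
      have m: "?C0 \<in> set (lex_spec X X A D n)" unfolding lex_spec_def using False j by force
      have e: "pb_simp ?C0 = ([(4, Pos (D (Suc j))), (3, Neg (D j)), (1, Pos (A j))], 2)" by (simp add: pb_simp_def)
      have mm: "pb_simp ?C0 \<in> set ?F" using m by auto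
      show ?thesis using False by (intro bexI[OF _ mm]) (unfold e, simp add: slack_def sg_def)
    qed
  qed
qed

theorem lemma13:
  "\<exists>K::nat. \<forall>n::nat. n \<ge> 1 \<longrightarrow>
     up_conflict_within (map pb_simp (lex_spec X X A D n) @ [([(1, Neg (D n))], 1)]) (K * n) \<and>
     rup_within (map pb_simp (lex_spec X X A D n)) ([(1, Pos (D n))], 1) (K * n)"
proof (intro exI allI impI conjI)
  fix n :: nat assume n: "n \<ge> 1"
  show "up_conflict_within (map pb_simp (lex_spec X X A D n) @ [([(1, Neg (D n))], 1)]) (6 * n)"
    using conc[OF n] .
  have "pb_neg ([(1, Pos (D n))], 1) = ([(1, Neg (D n))], 1)" by (simp add: pb_neg_def)
  then show "rup_within (map pb_simp (lex_spec X X A D n)) ([(1, Pos (D n))], 1) (6 * n)"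
    unfolding rup_within_def using conc[OF n] by simp
qed

end
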